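(* Let $p$ be a prime and let $R$ be the ring whose additive group is $\mathbb{Z}_{p^2}\oplus\mathbb{Z}_p\oplus\mathbb{Z}_p$ with basis $\{1,t,y\}$ (elements $r+st+hy$ with $r\in\mathbb{Z}_{p^2}$, $s,h\in\mathbb{Z}_p$), $1$ the identity, and multiplication determined by $t^2=0$, $y^2=y$, $ty=0$, $yt=t$. Then the pair $(1-t-y,\,t)\in R^2$ is not unimodular, the cyclic submodule $R(1-t-y,t)$ is free, and $(1-t-y,t)$ is an outlier.
   Context: $R^2$ is the free left $R$-module of pairs; $R(a,b)=\{(\alpha a,\alpha b):\alpha\in R\}$ is free if $r(a,b)=(0,0)$ implies $r=0$. A pair $(a,b)$ is (right) unimodular if there exist $x,y\in R$ with $ax+by=1$; it is an outlier if there are no $r\in R$ and unimodular $(x,y)\in R^2$ with $(a,b)=r(x,y)$. *)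

theory Defs
  imports "HOL-Algebra.Ring" "HOL-Computational_Algebra.Primes"
begin

definition unimodular :: "('a, 'm) ring_scheme \<Rightarrow> 'a \<Rightarrow> 'a \<Rightarrow> bool" where
  "unimodular R a b \<longleftrightarrow>
     (\<exists>x\<in>carrier R. \<exists>y\<in>carrier R. a \<otimes>\<^bsub>R\<^esub> x \<oplus>\<^bsub>R\<^esub> b \<otimes>\<^bsub>R\<^esub> y = \<one>\<^bsub>R\<^esub>)"

definition cyclic_free :: "('a, 'm) ring_scheme \<Rightarrow> 'a \<Rightarrow> 'a \<Rightarrow> bool" where
  "cyclic_free R a b \<longleftrightarrow>
     (\<forall>r\<in>carrier R. r \<otimes>\<^bsub>R\<^esub> a = \<zero>\<^bsub>R\<^esub> \<and> r \<otimes>\<^bsub>R\<^esub> b = \<zero>\<^bsub>R\<^esub> \<longrightarrow> r = \<zero>\<^bsub>R\<^esub>)"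

definition outlier :: "('a, 'm) ring_scheme \<Rightarrow> 'a \<Rightarrow> 'a \<Rightarrow> bool" where
  "outlier R a b \<longleftrightarrow>
     \<not> (\<exists>r\<in>carrier R. \<exists>x\<in>carrier R. \<exists>y\<in>carrier R.
           unimodular R x y \<and> a = r \<otimes>\<^bsub>R\<^esub> x \<and> b = r \<otimes>\<^bsub>R\<^esub> y)"

text \<open>The ring R_p: elements r + s t + h y encoded as integer triples (r,s,h) with
  0 \<le> r < p^2, 0 \<le> s,h < p. Multiplication from t^2 = 0, y^2 = y, ty = 0, yt = t:
  (r+st+hy)(r'+s't+h'y) = rr' + (rs' + sr' + hs') t + (rh' + hr' + hh') y.\<close>

definition Rp :: "int \<Rightarrow> (int \<times> int \<times> int) ring" where
  "Rp p = \<lparr> partial_object.carrier = {(r, s, h). 0 \<le> r \<and> r < p^2 \<and> 0 \<le> s \<and> s < p \<and> 0 \<le> h \<and> h < p},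
            monoid.mult = (\<lambda>(r, s, h) (r', s', h').
                      ((r * r') mod p^2, (r * s' + s * r' + h * s') mod p, (r * h' + h * r' + h * h') mod p)),
            monoid.one = (1, 0, 0),
            ring.zero = (0, 0, 0),
            ring.add = (\<lambda>(r, s, h) (r', s', h'). ((r + r') mod p^2, (s + s') mod p, (h + h') mod p)) \<rparr>"

definition Rp_t :: "int \<times> int \<times> int" where "Rp_t = (0, 1, 0)"
definition Rp_y :: "int \<times> int \<times> int" where "Rp_y = (0, 0, 1)"

end

theory Submission
  imports Defs
begin
lemma modtac: fixes m::int shows "m dvd (a - b) \<Longrightarrow> a mod m = b mod m"
  by (simp add: mod_eq_dvd_iff)
lemmas ms = minus_mult_div_eq_mod[symmetric, of _ p] minus_mult_div_eq_mod[symmetric, of _ "p^2"] dvd_def for p :: int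
lemma Rp_assoc0: "(a1,a2,a3) \<otimes>\<^bsub>Rp p\<^esub> (b1,b2,b3) \<otimes>\<^bsub>Rp p\<^esub> (c1,c2,c3) = (a1,a2,a3) \<otimes>\<^bsub>Rp p\<^esub> ((b1,b2,b3) \<otimes>\<^bsub>Rp p\<^esub> (c1,c2,c3))"
  apply (simp add: Rp_def)
  apply (intro conjI)
  subgoal by (simp add: mod_simps algebra_simps)
  subgoal by (rule modtac, unfold ms power2_eq_square, Groebner_Basis.algebra)
  subgoal by (rule modtac, unfold ms power2_eq_square, Groebner_Basis.algebra)
  done
lemma Rp_assoc: "x \<otimes>\<^bsub>Rp p\<^esub> y \<otimes>\<^bsub>Rp p\<^esub> z = x \<otimes>\<^bsub>Rp p\<^esub> (y \<otimes>\<^bsub>Rp p\<^esub> z)"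
  using Rp_assoc0 by (cases x; cases y; cases z) simp
lemma Rp_distl0: "((a1,a2,a3) \<oplus>\<^bsub>Rp p\<^esub> (b1,b2,b3)) \<otimes>\<^bsub>Rp p\<^esub> (c1,c2,c3) = (a1,a2,a3) \<otimes>\<^bsub>Rp p\<^esub> (c1,c2,c3) \<oplus>\<^bsub>Rp p\<^esub> (b1,b2,b3) \<otimes>\<^bsub>Rp p\<^esub> (c1,c2,c3)"
  apply (simp add: Rp_def)
  apply (intro conjI)
  subgoal by (simp add: mod_simps algebra_simps)
  subgoal by (rule modtac, unfold ms power2_eq_square, Groebner_Basis.algebra)
  subgoal by (rule modtac, unfold ms power2_eq_square, Groebner_Basis.algebra)
  done
lemma Rp_distl: "(x \<oplus>\<^bsub>Rp p\<^esub> y) \<otimes>\<^bsub>Rp p\<^esub> z = x \<otimes>\<^bsub>Rp p\<^esub> z \<oplus>\<^bsub>Rp p\<^esub> y \<otimes>\<^bsub>Rp p\<^esub> z"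
  using Rp_distl0 by (cases x; cases y; cases z) simp
lemma Rp_distr0: "(c1,c2,c3) \<otimes>\<^bsub>Rp p\<^esub> ((a1,a2,a3) \<oplus>\<^bsub>Rp p\<^esub> (b1,b2,b3)) = (c1,c2,c3) \<otimes>\<^bsub>Rp p\<^esub> (a1,a2,a3) \<oplus>\<^bsub>Rp p\<^esub> (c1,c2,c3) \<otimes>\<^bsub>Rp p\<^esub> (b1,b2,b3)"
  apply (simp add: Rp_def)
  apply (intro conjI)
  subgoal by (simp add: mod_simps algebra_simps)
  subgoal by (rule modtac, unfold ms power2_eq_square, Groebner_Basis.algebra)
  subgoal by (rule modtac, unfold ms power2_eq_square, Groebner_Basis.algebra)
  done
lemma Rp_distr: "z \<otimes>\<^bsub>Rp p\<^esub> (x \<oplus>\<^bsub>Rp p\<^esub> y) = z \<otimes>\<^bsub>Rp p\<^esub> x \<oplus>\<^bsub>Rp p\<^esub> z \<otimes>\<^bsub>Rp p\<^esub> y"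
  using Rp_distr0 by (cases x; cases y; cases z) simp

lemma Rp_ring: fixes p::int assumes p: "p > 1" shows "ring (Rp p)"
proof -
  have p0: "p > 0" and p20: "p^2 > 0" using p by auto
  show ?thesis
  proof (rule ringI)
    show "abelian_group (Rp p)"
    proof (rule abelian_groupI)
      fix x y assume "x \<in> carrier (Rp p)" "y \<in> carrier (Rp p)"
      then show "x \<oplus>\<^bsub>Rp p\<^esub> y \<in> carrier (Rp p)" using p0 p20 by (auto simp: Rp_def)
    next
      show "\<zero>\<^bsub>Rp p\<^esub> \<in> carrier (Rp p)" using p0 p20 by (auto simp: Rp_def)
    next
      fix x y z assume "x \<in> carrier (Rp p)" "y \<in> carrier (Rp p)" "z \<in> carrier (Rp p)"
      then show "x \<oplus>\<^bsub>Rp p\<^esub> y \<oplus>\<^bsub>Rp p\<^esub> z = x \<oplus>\<^bsub>Rp p\<^esub> (y \<oplus>\<^bsub>Rp p\<^esub> z)"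
        by (auto simp: Rp_def mod_simps add.assoc)
    next
      fix x y assume "x \<in> carrier (Rp p)" "y \<in> carrier (Rp p)"
      then show "x \<oplus>\<^bsub>Rp p\<^esub> y = y \<oplus>\<^bsub>Rp p\<^esub> x" by (auto simp: Rp_def add.commute)
    next
      fix x assume "x \<in> carrier (Rp p)"
      then show "\<zero>\<^bsub>Rp p\<^esub> \<oplus>\<^bsub>Rp p\<^esub> x = x" by (auto simp: Rp_def)
    next
      fix x assume "x \<in> carrier (Rp p)"
      then obtain r s h where x: "x = (r,s,h)" "0 \<le> r" "r < p^2" "0 \<le> s" "s < p" "0 \<le> h" "h < p"
        by (auto simp: Rp_def)
      show "\<exists>y\<in>carrier (Rp p). y \<oplus>\<^bsub>Rp p\<^esub> x = \<zero>\<^bsub>Rp p\<^esub>"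
        by (rule bexI[of _ "((p^2 - r) mod p^2, (p - s) mod p, (p - h) mod p)"])
           (use x p0 p20 in \<open>auto simp: Rp_def mod_simps\<close>)
    qed
  next
    show "monoid (Rp p)"
    proof (rule monoidI)
      fix x y assume "x \<in> carrier (Rp p)" "y \<in> carrier (Rp p)"
      then show "x \<otimes>\<^bsub>Rp p\<^esub> y \<in> carrier (Rp p)" using p0 p20 by (auto simp: Rp_def)
    next
      show "\<one>\<^bsub>Rp p\<^esub> \<in> carrier (Rp p)" using p by (auto simp: Rp_def)
    next
      fix x y z show "x \<otimes>\<^bsub>Rp p\<^esub> y \<otimes>\<^bsub>Rp p\<^esub> z = x \<otimes>\<^bsub>Rp p\<^esub> (y \<otimes>\<^bsub>Rp p\<^esub> z)"
        by (rule Rp_assoc)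
    next
      fix x assume "x \<in> carrier (Rp p)"
      then show "\<one>\<^bsub>Rp p\<^esub> \<otimes>\<^bsub>Rp p\<^esub> x = x" by (auto simp: Rp_def)
    next
      fix x assume "x \<in> carrier (Rp p)"
      then show "x \<otimes>\<^bsub>Rp p\<^esub> \<one>\<^bsub>Rp p\<^esub> = x" by (auto simp: Rp_def)
    qed
  qed (simp_all add: Rp_distl Rp_distr)
qed

lemma Rp_a: fixes p::int assumes p: "p > 1"
  shows "\<one>\<^bsub>Rp p\<^esub> \<ominus>\<^bsub>Rp p\<^esub> Rp_t \<ominus>\<^bsub>Rp p\<^esub> Rp_y = (1, p-1, p-1)"
proof -
  interpret R: ring "Rp p" using Rp_ring[OF p] .
  have p0: "p > 0" and p20: "p^2 > 1" using p by (auto simp: power2_eq_square less_1_mult)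
  have t: "\<ominus>\<^bsub>Rp p\<^esub> Rp_t = (0, p-1, 0)"
    by (rule R.minus_equality) (use p p20 in \<open>auto simp: Rp_def Rp_t_def\<close>)
  have y: "\<ominus>\<^bsub>Rp p\<^esub> Rp_y = (0, 0, p-1)"
    by (rule R.minus_equality) (use p p20 in \<open>auto simp: Rp_def Rp_y_def\<close>)
  show ?thesis using p p20 by (simp add: a_minus_def t y) (simp add: Rp_def zmod_minus1)
qed

lemma mod_dvdI: "(x::int) mod m = c \<Longrightarrow> m dvd x - c"
  by (metis dvd_minus_mod)
lemma mod2_dvdI: "((x::int) mod m + y mod m) mod m = c \<Longrightarrow> m dvd x + y - c"
  by (metis dvd_minus_mod mod_add_eq)
lemma dvd_lin2: "(p::int) dvd A \<Longrightarrow> p dvd B \<Longrightarrow> X = A*c + B*d \<Longrightarrow> p dvd X"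
  by simp
lemma dvd_lin3: "(p::int) dvd A \<Longrightarrow> p dvd B \<Longrightarrow> p dvd C \<Longrightarrow> X = A*c + B*d + C*e \<Longrightarrow> p dvd X"
  by simp
lemma sq_dvd: "(p::int)^2 dvd A \<Longrightarrow> p dvd A"
  by (metis dvd_mult_left power2_eq_square)

lemma not_unimod: fixes p::int assumes p: "p > 1"
  shows "\<not> unimodular (Rp p) (1, p-1, p-1) Rp_t"
proof
  assume "unimodular (Rp p) (1, p-1, p-1) Rp_t"
  then obtain x y where x: "x \<in> carrier (Rp p)" and y: "y \<in> carrier (Rp p)"
    and eq: "(1, p-1, p-1) \<otimes>\<^bsub>Rp p\<^esub> x \<oplus>\<^bsub>Rp p\<^esub> Rp_t \<otimes>\<^bsub>Rp p\<^esub> y = \<one>\<^bsub>Rp p\<^esub>"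
    unfolding unimodular_def by blast
  obtain r s h where xx: "x = (r,s,h)" by (cases x)
  obtain r' s' h' where yy: "y = (r',s',h')" by (cases y)
  have p2: "p^2 > 1" using p by (auto simp: power2_eq_square less_1_mult)
  have e1: "((1*r) mod p^2 + (0*r') mod p^2) mod p^2 = 1"
    using eq p2 unfolding xx yy by (simp add: Rp_def Rp_t_def)
  have e3: "((1*h + (p-1)*r + (p-1)*h) mod p + (0*h' + 0*r' + 0*h') mod p) mod p = 0"
    using eq unfolding xx yy by (simp add: Rp_def Rp_t_def)
  have "r = 1" using e1 x xx by (simp add: Rp_def)
  have d: "p dvd (1*h + (p-1)*r + (p-1)*h) + (0*h' + 0*r' + 0*h') - 0"
    by (rule mod2_dvdI[OF e3])
  have "p dvd 1"
    by (rule dvd_lin2[OF d dvd_refl, of _ "-1" "h+1"]) (simp add: \<open>r = 1\<close> algebra_simps)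
  then show False using p by (simp add: zdvd_imp_le[of p 1])
qed

lemma cfree: fixes p::int assumes p: "p > 1"
  shows "cyclic_free (Rp p) (1, p-1, p-1) Rp_t"
  unfolding cyclic_free_def
proof (intro ballI impI)
  fix x assume x: "x \<in> carrier (Rp p)"
    and eq: "x \<otimes>\<^bsub>Rp p\<^esub> (1, p - 1, p - 1) = \<zero>\<^bsub>Rp p\<^esub> \<and> x \<otimes>\<^bsub>Rp p\<^esub> Rp_t = \<zero>\<^bsub>Rp p\<^esub>"
  obtain r s h where xx: "x = (r,s,h)" by (cases x)
  have b: "0 \<le> r" "r < p^2" "0 \<le> s" "s < p" "0 \<le> h" "h < p" using x xx by (auto simp: Rp_def)
  have e1: "(r*1) mod p^2 = 0" and e2: "(r * (p-1) + s*1 + h*(p-1)) mod p = 0"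
    and e3: "(r*1 + s*0 + h*1) mod p = 0"
    using eq unfolding xx by (simp_all add: Rp_def Rp_t_def)
  have "r = 0" using e1 b by simp
  then have "h = 0" using e3 b by simp
  then have "s = 0" using e2 b \<open>r = 0\<close> by simp
  then show "x = \<zero>\<^bsub>Rp p\<^esub>" using xx \<open>r = 0\<close> \<open>h = 0\<close> by (simp add: Rp_def)
qed

lemma outl: fixes p::int assumes p: "p > 1"
  shows "outlier (Rp p) (1, p-1, p-1) Rp_t"
  unfolding outlier_def
proof
  assume "\<exists>r\<in>carrier (Rp p). \<exists>x\<in>carrier (Rp p). \<exists>y\<in>carrier (Rp p).
           unimodular (Rp p) x y \<and> (1, p-1, p-1) = r \<otimes>\<^bsub>Rp p\<^esub> x \<and> Rp_t = r \<otimes>\<^bsub>Rp p\<^esub> y"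
  then obtain r x w u v where
    ea: "(1, p-1, p-1) = r \<otimes>\<^bsub>Rp p\<^esub> x" and et: "Rp_t = r \<otimes>\<^bsub>Rp p\<^esub> w"
    and eu: "x \<otimes>\<^bsub>Rp p\<^esub> u \<oplus>\<^bsub>Rp p\<^esub> w \<otimes>\<^bsub>Rp p\<^esub> v = \<one>\<^bsub>Rp p\<^esub>"
    unfolding unimodular_def by blast
  obtain r1 r2 r3 where rr: "r = (r1,r2,r3)" by (cases r)
  obtain x1 x2 x3 where xx: "x = (x1,x2,x3)" by (cases x)
  obtain w1 w2 w3 where ww: "w = (w1,w2,w3)" by (cases w)
  obtain u1 u2 u3 where uu: "u = (u1,u2,u3)" by (cases u)
  obtain v1 v2 v3 where vv: "v = (v1,v2,v3)" by (cases v)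
  have p2: "p^2 > 1" using p by (auto simp: power2_eq_square less_1_mult)
  have e1: "(r1*x1) mod p^2 = 1" and e2: "(r1*x3 + r3*x1 + r3*x3) mod p = p - 1"
    using ea unfolding rr xx by (simp_all add: Rp_def)
  have e3: "(r1*w1) mod p^2 = 0" and e4: "(r1*w2 + r2*w1 + r3*w2) mod p = 1"
    and e5: "(r1*w3 + r3*w1 + r3*w3) mod p = 0"
    using et unfolding rr ww by (simp_all add: Rp_def Rp_t_def)
  have e6: "((x1*u1) mod p^2 + (w1*v1) mod p^2) mod p^2 = 1"
    and e7: "((x1*u3 + x3*u1 + x3*u3) mod p + (w1*v3 + w3*v1 + w3*v3) mod p) mod p = 0"
    using eu p2 unfolding xx ww uu vv by (simp_all add: Rp_def)
  have d1: "p^2 dvd r1*x1 - 1" by (rule mod_dvdI[OF e1])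
  have d2: "p dvd (r1*x3 + r3*x1 + r3*x3) - (p - 1)" by (rule mod_dvdI[OF e2])
  have d3: "p^2 dvd r1*w1 - 0" by (rule mod_dvdI[OF e3])
  have d4: "p dvd (r1*w2 + r2*w1 + r3*w2) - 1" by (rule mod_dvdI[OF e4])
  have d5: "p dvd (r1*w3 + r3*w1 + r3*w3) - 0" by (rule mod_dvdI[OF e5])
  have d6: "p dvd x1*u1 + w1*v1 - 1" by (rule sq_dvd, rule mod2_dvdI[OF e6])
  have d7: "p dvd (x1*u3 + x3*u1 + x3*u3) + (w1*v3 + w3*v1 + w3*v3) - 0" by (rule mod2_dvdI[OF e7])
  have f1: "p dvd (r1 + r3) * (x1 + x3)"
    by (rule dvd_lin3[OF sq_dvd[OF d1] d2 dvd_refl, of _ 1 1 1]) Groebner_Basis.algebra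
  have f2: "p dvd (r1 + r3) * (w1 + w3)"
    by (rule dvd_lin2[OF sq_dvd[OF d3] d5, of _ 1 1]) Groebner_Basis.algebra
  have f3: "p dvd (x1 + x3) * (u1 + u3) + (w1 + w3) * (v1 + v3) - 1"
    by (rule dvd_lin2[OF d6 d7, of _ 1 1]) Groebner_Basis.algebra
  have f4: "p dvd (r1 + r3)"
    by (rule dvd_lin3[OF f1 f2 f3, of _ "u1 + u3" "v1 + v3" "-(r1+r3)"]) Groebner_Basis.algebra
  have f5: "p dvd r2*w1 - 1"
    by (rule dvd_lin2[OF d4 f4, of _ 1 "-w2"]) Groebner_Basis.algebra
  have f6: "p^2 dvd w1"
    by (rule dvd_lin2[OF d1 d3, of _ "-w1" "x1"]) Groebner_Basis.algebra
  have "p dvd 1"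
    by (rule dvd_lin2[OF sq_dvd[OF f6] f5, of _ r2 "-1"]) Groebner_Basis.algebra
  then show False using p by (simp add: zdvd_imp_le[of p 1])
qed

theorem mainTheorem15:
  fixes p :: int
  assumes "prime p"
  defines "R \<equiv> Rp p"
  defines "a \<equiv> \<one>\<^bsub>R\<^esub> \<ominus>\<^bsub>R\<^esub> Rp_t \<ominus>\<^bsub>R\<^esub> Rp_y"
  shows "ring R \<and> \<not> unimodular R a Rp_t \<and> cyclic_free R a Rp_t \<and> outlier R a Rp_t"
proof -
  have p: "p > 1" using assms(1) prime_gt_1_int by blast
  have a: "a = (1, p-1, p-1)" unfolding a_def R_def by (rule Rp_a[OF p])
  show ?thesis unfolding a R_def using Rp_ring[OF p] not_unimod[OF p] cfree[OF p] outl[OF p] by blast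
qed
end
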